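(* Let $A$ be a finite alphabet. A language $L\subseteq A^*$ is definable by a sentence of $FO^2[<,\mathrm{Inv}]$ if and only if it is definable by a sentence of $FO^2[<,\mathrm{Th}]$. That is, as language classes, $FO^2[<,\mathrm{Inv}]=FO^2[<,\mathrm{Th}]$.
   Context: Words $w\in A^*$ are finite structures whose universe is the set of positions $\{1,\dots,|w|\}$; $w(i)$ denotes the $i$-th letter. For each $a\in A$ there is a unary predicate $a(x)$, true iff the letter at position $x$ is $a$, and the order $<$ on positions. A sentence $\phi$ defines the language $\{w\in A^*: w\models\phi\}$; formulas may be interpreted in the empty word, where every existentially quantified sentence is false and every universally quantified one is true. For $a\in A$, the binary "between" predicate $a(x,y)$ means $\exists z\,(x<z\wedge z<y\wedge a(z))$, i.e. the letter $a$ occurs strictly between positions $x$ and $y$. $FO^2[<,\mathrm{Inv}]$ is the set of first-order formulas built from $<$, the unary predicates $a(x)$ and the binary predicates $a(x,y)$ ($a\in A$) using only two variables (which may be reused). For $a\in A$ and $k\ge 0$, the predicate $(a,k)(x,y)$ means that $x<y$ and there are at least $k$ positions $z$ with $x<z<y$ and $w(z)=a$. $FO^2[<,\mathrm{Th}]$ is the two-variable logic built from $<$, the unary predicates $a(x)$, and all predicates $(a,k)(x,y)$ ($a\in A$, $k\ge 0$). *)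

theory Defs
  imports Main
begin

text \<open>Words are lists; positions are 0-based indices 0..<length w (a shift of the
paper's 1-based positions, which changes nothing). The two variables of FO2.\<close>

datatype var = X | Y

datatype 'a fo2_inv =
    ILess var var
  | ILetter 'a var
  | IBetween 'a var var
  | INeg "'a fo2_inv"
  | IAnd "'a fo2_inv" "'a fo2_inv"
  | IEx var "'a fo2_inv"

datatype 'a fo2_th =
    TLess var var
  | TLetter 'a var
  | TThr 'a nat var var
  | TNeg "'a fo2_th"
  | TAnd "'a fo2_th" "'a fo2_th"
  | TEx var "'a fo2_th"

fun fv_inv :: "'a fo2_inv \<Rightarrow> var set" where
  "fv_inv (ILess x y) = {x, y}"
| "fv_inv (ILetter a x) = {x}"
| "fv_inv (IBetween a x y) = {x, y}"
| "fv_inv (INeg f) = fv_inv f"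
| "fv_inv (IAnd f g) = fv_inv f \<union> fv_inv g"
| "fv_inv (IEx x f) = fv_inv f - {x}"

fun fv_th :: "'a fo2_th \<Rightarrow> var set" where
  "fv_th (TLess x y) = {x, y}"
| "fv_th (TLetter a x) = {x}"
| "fv_th (TThr a k x y) = {x, y}"
| "fv_th (TNeg f) = fv_th f"
| "fv_th (TAnd f g) = fv_th f \<union> fv_th g"
| "fv_th (TEx x f) = fv_th f - {x}"

fun sat_inv :: "'a list \<Rightarrow> (var \<Rightarrow> nat) \<Rightarrow> 'a fo2_inv \<Rightarrow> bool" where
  "sat_inv w v (ILess x y) = (v x < v y)"
| "sat_inv w v (ILetter a x) = (w ! v x = a)"
| "sat_inv w v (IBetween a x y) = (\<exists>z. v x < z \<and> z < v y \<and> w ! z = a)"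
| "sat_inv w v (INeg f) = (\<not> sat_inv w v f)"
| "sat_inv w v (IAnd f g) = (sat_inv w v f \<and> sat_inv w v g)"
| "sat_inv w v (IEx x f) = (\<exists>i < length w. sat_inv w (v(x := i)) f)"

fun sat_th :: "'a list \<Rightarrow> (var \<Rightarrow> nat) \<Rightarrow> 'a fo2_th \<Rightarrow> bool" where
  "sat_th w v (TLess x y) = (v x < v y)"
| "sat_th w v (TLetter a x) = (w ! v x = a)"
| "sat_th w v (TThr a k x y) =
     (v x < v y \<and> k \<le> card {z. v x < z \<and> z < v y \<and> w ! z = a})"
| "sat_th w v (TNeg f) = (\<not> sat_th w v f)"
| "sat_th w v (TAnd f g) = (sat_th w v f \<and> sat_th w v g)"
| "sat_th w v (TEx x f) = (\<exists>i < length w. sat_th w (v(x := i)) f)"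

text \<open>Languages defined by sentences (closed formulas; truth does not depend on
the assignment, we use the constant-0 one).\<close>
definition lang_inv :: "'a fo2_inv \<Rightarrow> 'a list set" where
  "lang_inv f = {w. sat_inv w (\<lambda>_. 0) f}"

definition lang_th :: "'a fo2_th \<Rightarrow> 'a list set" where
  "lang_th f = {w. sat_th w (\<lambda>_. 0) f}"

definition FO2_Inv_definable :: "'a list set \<Rightarrow> bool" where
  "FO2_Inv_definable L \<longleftrightarrow> (\<exists>f. fv_inv f = {} \<and> L = lang_inv f)"

definition FO2_Th_definable :: "'a list set \<Rightarrow> bool" where
  "FO2_Th_definable L \<longleftrightarrow> (\<exists>f. fv_th f = {} \<and> L = lang_th f)"

end

theory Submission
  imports Defs
begin


fun oth :: "var \<Rightarrow> var" where "oth X = Y" | "oth Y = X"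
lemma oth_neq[simp]: "oth x \<noteq> x" "x \<noteq> oth x" by (cases x; simp)+

definition D1 :: "('a list \<Rightarrow> nat \<Rightarrow> bool) \<Rightarrow> bool" where
"D1 P \<longleftrightarrow> (\<forall>x. \<exists>\<psi>. fv_inv \<psi> \<subseteq> {x} \<and> (\<forall>w v. v x < length w \<longrightarrow> sat_inv w v \<psi> = P w (v x)))"

lemma D1I: "(\<And>x. \<exists>\<psi>. fv_inv \<psi> \<subseteq> {x} \<and> (\<forall>w v. v x < length w \<longrightarrow> sat_inv w v \<psi> = P w (v x))) \<Longrightarrow> D1 P"
  unfolding D1_def by blast

lemma D1E: "D1 P \<Longrightarrow> (\<And>\<psi>. fv_inv \<psi> \<subseteq> {x} \<Longrightarrow> (\<And>w v. v x < length w \<Longrightarrow> sat_inv w v \<psi> = P w (v x)) \<Longrightarrow> thesis) \<Longrightarrow> thesis"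
  unfolding D1_def by blast

lemma D1_const: "D1 (\<lambda>w i. c)"
proof (rule D1I)
  fix x
  show "\<exists>\<psi>. fv_inv \<psi> \<subseteq> {x} \<and> (\<forall>w v. v x < length w \<longrightarrow> sat_inv w v \<psi> = c)"
    by (rule exI[of _ "if c then INeg (ILess x x) else ILess x x"]) auto
qed

lemma D1_letter: "D1 (\<lambda>w i. w ! i = a)"
proof (rule D1I)
  fix x
  show "\<exists>\<psi>. fv_inv \<psi> \<subseteq> {x} \<and> (\<forall>w v. v x < length w \<longrightarrow> sat_inv w v \<psi> = (w ! v x = a))"
    by (rule exI[of _ "ILetter a x"]) auto
qed

lemma D1_neg: "D1 P \<Longrightarrow> D1 (\<lambda>w i. \<not> P w i)"
proof (rule D1I)
  fix x assume "D1 P"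
  then obtain p where "fv_inv p \<subseteq> {x}" "\<And>w v. v x < length w \<Longrightarrow> sat_inv w v p = P w (v x)" by (rule D1E[where x=x]) blast
  then show "\<exists>\<psi>. fv_inv \<psi> \<subseteq> {x} \<and> (\<forall>w v. v x < length w \<longrightarrow> sat_inv w v \<psi> = (\<not> P w (v x)))"
    by (intro exI[of _ "INeg p"]) auto
qed

lemma D1_and: "D1 P \<Longrightarrow> D1 Q \<Longrightarrow> D1 (\<lambda>w i. P w i \<and> Q w i)"
proof (rule D1I)
  fix x assume "D1 P" "D1 Q"
  from \<open>D1 P\<close> obtain p where "fv_inv p \<subseteq> {x}" "\<And>w v. v x < length w \<Longrightarrow> sat_inv w v p = P w (v x)" by (rule D1E[where x=x]) blast
  moreover from \<open>D1 Q\<close> obtain q where "fv_inv q \<subseteq> {x}" "\<And>w v. v x < length w \<Longrightarrow> sat_inv w v q = Q w (v x)" by (rule D1E[where x=x]) blast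
  ultimately show "\<exists>\<psi>. fv_inv \<psi> \<subseteq> {x} \<and> (\<forall>w v. v x < length w \<longrightarrow> sat_inv w v \<psi> = (P w (v x) \<and> Q w (v x)))"
    by (intro exI[of _ "IAnd p q"]) auto
qed

lemma D1_or: "D1 P \<Longrightarrow> D1 Q \<Longrightarrow> D1 (\<lambda>w i. P w i \<or> Q w i)"
  using D1_neg[OF D1_and[OF D1_neg D1_neg]] by simp

lemma D1_cong: "D1 P \<Longrightarrow> (\<And>w i. i < length w \<Longrightarrow> P w i = P' w i) \<Longrightarrow> D1 P'"
  unfolding D1_def by metis

lemma D1_eqb: "D1 P \<Longrightarrow> D1 (\<lambda>w i. P w i = b)"
  by (cases b) (auto intro: D1_neg)

lemma D1_eqlist: "\<forall>P\<in>set Ps. D1 P \<Longrightarrow> D1 (\<lambda>w i. map (\<lambda>P. P w i) Ps = bs)"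
proof (induction Ps arbitrary: bs)
  case Nil then show ?case by (cases bs) (auto intro: D1_const)
next
  case (Cons P Ps)
  show ?case
  proof (cases bs)
    case Nil then show ?thesis by (auto intro: D1_const)
  next
    case (Cons b bs')
    have "D1 (\<lambda>w i. P w i = b \<and> map (\<lambda>P. P w i) Ps = bs')"
      using Cons.prems Cons.IH by (auto intro!: D1_and D1_eqb)
    then show ?thesis using Cons by simp
  qed
qed

lemma D1_fin_ex: "finite S \<Longrightarrow> (\<forall>s\<in>S. D1 (P s)) \<Longrightarrow> D1 (\<lambda>w i. \<exists>s\<in>S. P s w i)"
proof (induction S rule: finite_induct)
  case empty then show ?case by (simp add: D1_const)
next
  case (insert s S)
  then have "D1 (\<lambda>w i. P s w i \<or> (\<exists>s\<in>S. P s w i))" by (intro D1_or) auto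
  then show ?case by simp
qed

lemma D1_bc: "\<forall>P\<in>set Ps. D1 P \<Longrightarrow> D1 (\<lambda>w i. g (map (\<lambda>P. P w i) Ps))"
proof -
  assume a: "\<forall>P\<in>set Ps. D1 P"
  let ?B = "{bs :: bool list. set bs \<subseteq> UNIV \<and> length bs = length Ps}"
  have fin: "finite ?B" by (rule finite_lists_length_eq) simp
  have "D1 (\<lambda>w i. \<exists>bs\<in>?B. g bs \<and> map (\<lambda>P. P w i) Ps = bs)"
    using fin a by (intro D1_fin_ex) (auto intro!: D1_and D1_const D1_eqlist)
  then show ?thesis by (rule D1_cong) auto
qed

definition betw :: "bool \<Rightarrow> nat \<Rightarrow> nat \<Rightarrow> nat \<Rightarrow> bool" where
"betw d i j z = (if d then i < z \<and> z < j else j < z \<and> z < i)"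
definition ltd :: "bool \<Rightarrow> nat \<Rightarrow> nat \<Rightarrow> bool" where
"ltd d i j = (if d then i < j else j < i)"
definition cntd :: "bool \<Rightarrow> 'a list \<Rightarrow> 'a \<Rightarrow> nat \<Rightarrow> nat \<Rightarrow> nat" where
"cntd d w a i j = card {z. betw d i j z \<and> w ! z = a}"

definition lessd :: "bool \<Rightarrow> var \<Rightarrow> var \<Rightarrow> 'a fo2_inv" where
"lessd d x y = (if d then ILess x y else ILess y x)"
definition betd :: "bool \<Rightarrow> 'a \<Rightarrow> var \<Rightarrow> var \<Rightarrow> 'a fo2_inv" where
"betd d a x y = (if d then IBetween a x y else IBetween a y x)"

fun nob :: "bool \<Rightarrow> 'a list \<Rightarrow> var \<Rightarrow> var \<Rightarrow> 'a fo2_inv" where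
  "nob d [] x y = INeg (ILess x x)"
| "nob d (a # as) x y = IAnd (INeg (betd d a x y)) (nob d as x y)"

lemma sat_lessd[simp]: "sat_inv w v (lessd d x y) = ltd d (v x) (v y)"
  by (simp add: lessd_def ltd_def)
lemma fv_lessd: "fv_inv (lessd d x y) \<subseteq> {x, y}"
  by (simp add: lessd_def)
lemma sat_nob: "sat_inv w v (nob d xs x y) = (\<forall>z. betw d (v x) (v y) z \<longrightarrow> w ! z \<notin> set xs)"
  by (induction xs) (auto simp: betd_def betw_def)
lemma fv_nob: "fv_inv (nob d xs x y) \<subseteq> {x, y}"
  by (induction xs) (auto simp: betd_def)

lemma D1_step:
  assumes "D1 Q" "finite S"
  shows "D1 (\<lambda>w i. \<exists>j<length w. ltd d i j \<and> (\<forall>z. betw d i j z \<longrightarrow> w ! z \<notin> S) \<and> Q w j)"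
proof (rule D1I)
  fix x
  let ?y = "oth x"
  from \<open>D1 Q\<close> obtain q where q: "fv_inv q \<subseteq> {?y}" "\<And>w v. v ?y < length w \<Longrightarrow> sat_inv w v q = Q w (v ?y)" by (rule D1E[where x="oth x"]) blast
  obtain xs where xs: "set xs = S" using finite_list[OF \<open>finite S\<close>] by blast
  let ?psi = "IEx ?y (IAnd (lessd d x ?y) (IAnd (nob d xs x ?y) q))"
  have "fv_inv ?psi \<subseteq> {x}" using q(1) fv_lessd[of d x ?y] fv_nob[of d xs x ?y] by auto
  moreover have "sat_inv w v ?psi = (\<exists>j<length w. ltd d (v x) j \<and> (\<forall>z. betw d (v x) j z \<longrightarrow> w ! z \<notin> S) \<and> Q w j)" for w v
    using q(2) xs by (auto simp: sat_nob)
  ultimately show "\<exists>\<psi>. fv_inv \<psi> \<subseteq> {x} \<and> (\<forall>w v. v x < length w \<longrightarrow> sat_inv w v \<psi> = (\<exists>j<length w. ltd d (v x) j \<and> (\<forall>z. betw d (v x) j z \<longrightarrow> w ! z \<notin> S) \<and> Q w j))"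
    by blast
qed

lemma fin_betw: "finite {z. betw d i j z \<and> P z}"
  by (rule finite_subset[of _ "{..<max i j}"]) (auto simp: betw_def)

lemma cnt_split:
  assumes "betw d i j z"
  shows "cntd d w a i j = cntd d w a i z + (if w ! z = a then 1 else 0) + cntd d w a z j"
proof -
  have eq: "{z'. betw d i j z' \<and> w ! z' = a} =
     ({z'. betw d i z z' \<and> w ! z' = a} \<union> {z'. z' = z \<and> w ! z' = a}) \<union> {z'. betw d z j z' \<and> w ! z' = a}"
    using assms by (auto simp: betw_def split: if_splits)
  have c: "card {z'. z' = z \<and> w ! z' = a} = (if w ! z = a then 1 else 0)"
  proof (cases "w ! z = a")
    case True then have "{z'. z' = z \<and> w ! z' = a} = {z}" by auto
    then show ?thesis using True by simp
  qed auto
  show ?thesis unfolding cntd_def eq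
    apply (subst card_Un_disjoint)
    using assms apply (auto simp: fin_betw betw_def split: if_splits)[3]
    apply (subst card_Un_disjoint)
    using assms apply (auto simp: fin_betw betw_def c split: if_splits)
    done
qed

lemma cnt_zero: "(\<forall>z. betw d i j z \<longrightarrow> w ! z \<noteq> a) \<Longrightarrow> cntd d w a i j = 0"
  proof -
  assume h: "\<forall>z. betw d i j z \<longrightarrow> w ! z \<noteq> a"
  then have "{z. betw d i j z \<and> w ! z = a} = {}" by auto
  then show ?thesis unfolding cntd_def by (metis card.empty)
qed

lemma cnt_pos: "0 < cntd d w a i j \<Longrightarrow> \<exists>z. betw d i j z \<and> w ! z = a"
  unfolding cntd_def by (metis (mono_tags, lifting) card.empty empty_Collect_eq less_irrefl)

lemma first_occ:
  assumes "betw d i j z" "w ! z \<in> S"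
  shows "\<exists>z. betw d i j z \<and> w ! z \<in> S \<and> (\<forall>z'. betw d i z z' \<longrightarrow> w ! z' \<notin> S)"
  using assms
proof (induction z rule: measure_induct_rule[where f = "\<lambda>z. if d then z - i else i - z"])
  case (less z)
  show ?case
  proof (cases "\<exists>z'. betw d i z z' \<and> w ! z' \<in> S")
    case True
    then obtain z' where z': "betw d i z z'" "w ! z' \<in> S" by blast
    have "betw d i j z'" using z'(1) less.prems(1) by (auto simp: betw_def split: if_splits)
    moreover have "(if d then z' - i else i - z') < (if d then z - i else i - z)"
      using z'(1) by (auto simp: betw_def split: if_splits)
    ultimately show ?thesis using less.IH z'(2) by blast
  next
    case False then show ?thesis using less.prems by blast
  qed
qed



definition Tr :: "bool \<Rightarrow> ('a \<Rightarrow> nat) \<Rightarrow> ('a \<Rightarrow> bool) \<Rightarrow> 'a list \<Rightarrow> nat \<Rightarrow> nat \<Rightarrow> bool" where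
"Tr d r u w i j = (ltd d i j \<and> (\<forall>a. (u a \<longrightarrow> cntd d w a i j = r a) \<and> (\<not> u a \<longrightarrow> r a \<le> cntd d w a i j)))"

lemma betw_lt: "betw d i j z \<Longrightarrow> i < length w \<Longrightarrow> j < length w \<Longrightarrow> z < length w"
  by (auto simp: betw_def split: if_splits)

lemma walk_eq:
  assumes i: "i < length w" and S: "S = {a. 0 < r a \<or> u a}"
  shows "(\<exists>j<length w. Tr d r u w i j \<and> Q w j) \<longleftrightarrow>
    (r = (\<lambda>_. 0) \<and> (\<exists>j<length w. ltd d i j \<and> (\<forall>z. betw d i j z \<longrightarrow> w ! z \<notin> S) \<and> Q w j)) \<or>
    (\<exists>b\<in>S. 0 < r b \<and> (\<exists>z<length w. ltd d i z \<and> (\<forall>z'. betw d i z z' \<longrightarrow> w ! z' \<notin> S) \<and>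
        (w ! z = b \<and> (\<exists>j<length w. Tr d (r(b := r b - 1)) u w z j \<and> Q w j))))"
    (is "?L \<longleftrightarrow> ?R1 \<or> ?R2")
proof
  assume ?L
  then obtain j where j: "j < length w" "Tr d r u w i j" "Q w j" by blast
  show "?R1 \<or> ?R2"
  proof (cases "r = (\<lambda>_. 0)")
    case True
    have "\<forall>z. betw d i j z \<longrightarrow> w ! z \<notin> S"
    proof (intro allI impI)
      fix z assume z: "betw d i j z"
      show "w ! z \<notin> S"
      proof
        assume "w ! z \<in> S"
        then have "u (w ! z)" using S True by auto
        then have "cntd d w (w ! z) i j = 0" using j(2) True unfolding Tr_def by auto
        moreover have "cntd d w (w ! z) i j \<ge> 1" using cnt_split[OF z, of w "w ! z"] by simp
        ultimately show False by simp
      qed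
    qed
    then show ?thesis using True j unfolding Tr_def by blast
  next
    case False
    then obtain a0 where a0: "0 < r a0" by (metis (full_types) neq0_conv)
    have c0: "0 < cntd d w a0 i j" using j(2) a0 unfolding Tr_def by (metis le_trans le_refl not_le)
    obtain z0 where z0: "betw d i j z0" "w ! z0 = a0" using cnt_pos[OF c0] by blast
    have "w ! z0 \<in> S" using S a0 z0 by auto
    then obtain z where z: "betw d i j z" "w ! z \<in> S" "\<forall>z'. betw d i z z' \<longrightarrow> w ! z' \<notin> S"
      using first_occ[OF z0(1)] by blast
    define b where "b = w ! z"
    have split: "cntd d w a i j = cntd d w a i z + (if b = a then 1 else 0) + cntd d w a z j" for a
      using cnt_split[OF z(1), of w a] unfolding b_def by simp
    have zero: "a \<in> S \<Longrightarrow> cntd d w a i z = 0" for a using cnt_zero z(3) by metis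
    have bS: "b \<in> S" using z b_def by simp
    have rb: "0 < r b"
    proof (rule ccontr)
      assume "\<not> 0 < r b"
      then have "u b" "r b = 0" using bS S by auto
      then have "cntd d w b i j = 0" using j(2) unfolding Tr_def by auto
      then show False using split[of b] by simp
    qed
    have zl: "z < length w" using betw_lt[OF z(1) i j(1)] .
    have "ltd d i z" "ltd d z j" using z(1) by (auto simp: betw_def ltd_def split: if_splits)
    have "Tr d (r(b := r b - 1)) u w z j"
      unfolding Tr_def
    proof (rule conjI[OF _ allI])
      show "ltd d z j" by fact
      fix a
      show "(u a \<longrightarrow> cntd d w a z j = (r(b := r b - 1)) a) \<and> (\<not> u a \<longrightarrow> (r(b := r b - 1)) a \<le> cntd d w a z j)"
      proof (cases "a \<in> S")
        case True
        have H: "(u a \<longrightarrow> cntd d w a i j = r a) \<and> (\<not> u a \<longrightarrow> r a \<le> cntd d w a i j)"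
          using j(2) unfolding Tr_def by blast
        have sp: "cntd d w a i j = (if b = a then 1 else 0) + cntd d w a z j"
          using split[of a] zero[OF True] by simp
        show ?thesis
        proof (cases "a = b")
          case True then show ?thesis using H sp rb by auto
        next
          case False then show ?thesis using H sp by auto
        qed
      next
        case False
        then have "r a = 0" "\<not> u a" "a \<noteq> b" using S bS by auto
        then show ?thesis by simp
      qed
    qed
    then have ?R2 using bS rb zl \<open>ltd d i z\<close> z(3) j(1,3) b_def by blast
    then show ?thesis ..
  qed
next
  assume "?R1 \<or> ?R2"
  then show ?L
  proof
    assume ?R1
    then obtain j where j: "j < length w" "ltd d i j" "\<forall>z. betw d i j z \<longrightarrow> w ! z \<notin> S" "Q w j" and r0: "r = (\<lambda>_. 0)"
      by blast
    have "Tr d r u w i j" unfolding Tr_def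
    proof (rule conjI[OF _ allI])
      show "ltd d i j" by fact
      fix a
      show "(u a \<longrightarrow> cntd d w a i j = r a) \<and> (\<not> u a \<longrightarrow> r a \<le> cntd d w a i j)"
      proof (cases "u a")
        case True then have "a \<in> S" using S by auto
        then have "cntd d w a i j = 0" using j(3) cnt_zero by metis
        then show ?thesis using r0 by simp
      next
        case False then show ?thesis using r0 by simp
      qed
    qed
    then show ?L using j by blast
  next
    assume ?R2
    then obtain b z j where bS: "b \<in> S" and rb: "0 < r b" and z: "z < length w" "ltd d i z" "\<forall>z'. betw d i z z' \<longrightarrow> w ! z' \<notin> S"
      "w ! z = b" and j: "j < length w" "Tr d (r(b := r b - 1)) u w z j" "Q w j" by blast
    have zb: "betw d i j z" using z(2) j(2) unfolding Tr_def by (auto simp: betw_def ltd_def split: if_splits)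
    have split: "cntd d w a i j = cntd d w a i z + (if b = a then 1 else 0) + cntd d w a z j" for a
      using cnt_split[OF zb, of w a] z(4) by simp
    have zero: "a \<in> S \<Longrightarrow> cntd d w a i z = 0" for a using cnt_zero z(3) by metis
    have "Tr d r u w i j" unfolding Tr_def
    proof (rule conjI[OF _ allI])
      show "ltd d i j" using z(2) j(2) unfolding Tr_def by (auto simp: ltd_def split: if_splits)
      fix a
      show "(u a \<longrightarrow> cntd d w a i j = r a) \<and> (\<not> u a \<longrightarrow> r a \<le> cntd d w a i j)"
      proof (cases "a \<in> S")
        case True
        have H: "(u a \<longrightarrow> cntd d w a z j = (r(b := r b - 1)) a) \<and> (\<not> u a \<longrightarrow> (r(b := r b - 1)) a \<le> cntd d w a z j)"
          using j(2) unfolding Tr_def by blast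
        have sp: "cntd d w a i j = (if b = a then 1 else 0) + cntd d w a z j"
          using split[of a] zero[OF True] by simp
        show ?thesis
        proof (cases "a = b")
          case True then show ?thesis using H sp rb by auto
        next
          case False then show ?thesis using H sp by auto
        qed
      next
        case False
        then have "r a = 0" "\<not> u a" using S by auto
        then show ?thesis by simp
      qed
    qed
    then show ?L using j by blast
  qed
qed

lemma D1_walk:
  fixes r :: "'a::finite \<Rightarrow> nat"
  assumes "D1 Q"
  shows "D1 (\<lambda>w i. \<exists>j<length w. Tr d r u w i j \<and> Q w j)"
  using assms
proof (induction "sum r UNIV" arbitrary: r Q rule: less_induct)
  case less
  define S where "S = {a. 0 < r a \<or> u a}"
  have finS: "finite S" by simp
  have IH: "D1 (\<lambda>w z. w ! z = b \<and> (\<exists>j<length w. Tr d (r(b := r b - 1)) u w z j \<and> Q w j))" if "0 < r b" for b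
  proof -
    have "sum (r(b := r b - 1)) UNIV < sum r UNIV"
    proof -
      have e1: "sum r UNIV = r b + sum r (UNIV - {b})" by (rule sum.remove) simp_all
      have e2: "sum (r(b := r b - 1)) UNIV = (r b - 1) + sum (r(b := r b - 1)) (UNIV - {b})"
        by (subst sum.remove[of UNIV b]) simp_all
      have e3: "sum (r(b := r b - 1)) (UNIV - {b}) = sum r (UNIV - {b})" by (rule sum.cong) auto
      show ?thesis using e1 e2 e3 that by linarith
    qed
    then show ?thesis using less by (intro D1_and[OF D1_letter]) auto
  qed
  have A1: "D1 (\<lambda>w i. \<exists>j<length w. ltd d i j \<and> (\<forall>z. betw d i j z \<longrightarrow> w ! z \<notin> S) \<and> Q w j)"
    by (rule D1_step[OF less.prems finS])
  have A2: "D1 (\<lambda>w i. r = (\<lambda>_. 0) \<and> (\<exists>j<length w. ltd d i j \<and> (\<forall>z. betw d i j z \<longrightarrow> w ! z \<notin> S) \<and> Q w j))"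
    by (rule D1_and[OF D1_const A1])
  have B1: "D1 (\<lambda>w i. 0 < r b \<and> (\<exists>z<length w. ltd d i z \<and> (\<forall>z'. betw d i z z' \<longrightarrow> w ! z' \<notin> S) \<and>
        (w ! z = b \<and> (\<exists>j<length w. Tr d (r(b := r b - 1)) u w z j \<and> Q w j))))" for b
  proof (cases "0 < r b")
    case True then show ?thesis by (rule_tac D1_and[OF D1_const D1_step[OF IH[OF True] finS]])
  next
    case False then show ?thesis using D1_const[of False] by simp
  qed
  have B2: "D1 (\<lambda>w i. \<exists>b\<in>S. 0 < r b \<and> (\<exists>z<length w. ltd d i z \<and> (\<forall>z'. betw d i z z' \<longrightarrow> w ! z' \<notin> S) \<and>
        (w ! z = b \<and> (\<exists>j<length w. Tr d (r(b := r b - 1)) u w z j \<and> Q w j))))"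
    by (rule D1_fin_ex[OF finS]) (use B1 in blast)
  have "D1 (\<lambda>w i. (r = (\<lambda>_. 0) \<and> (\<exists>j<length w. ltd d i j \<and> (\<forall>z. betw d i j z \<longrightarrow> w ! z \<notin> S) \<and> Q w j)) \<or>
    (\<exists>b\<in>S. 0 < r b \<and> (\<exists>z<length w. ltd d i z \<and> (\<forall>z'. betw d i z z' \<longrightarrow> w ! z' \<notin> S) \<and>
        (w ! z = b \<and> (\<exists>j<length w. Tr d (r(b := r b - 1)) u w z j \<and> Q w j)))))"
    by (rule D1_or[OF A2 B2])
  then show ?case by (rule D1_cong) (rule walk_eq[symmetric], auto simp: S_def)
qed



definition prof :: "nat \<Rightarrow> 'a list \<Rightarrow> nat \<Rightarrow> nat \<Rightarrow> nat \<times> ('a \<Rightarrow> nat)" where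
"prof K w i j = (if i < j then (0, \<lambda>a. min K (cntd True w a i j)) else if i = j then (1, \<lambda>a. 0)
   else (2, \<lambda>a. min K (cntd False w a i j)))"

lemma D1_prof:
  fixes Q :: "('a::finite) list \<Rightarrow> nat \<Rightarrow> bool"
  assumes Q: "D1 Q"
  shows "D1 (\<lambda>w i. \<exists>j<length w. prof K w i j = p \<and> Q w j)"
proof -
  obtain oo c where p: "p = (oo, c)" by (cases p)
  show ?thesis
  proof (cases "(oo = 0 \<or> oo = 2) \<and> (\<forall>a. c a \<le> K)")
    case True
    define d where "d = (oo = 0)"
    have eq: "(prof K w i j = p) = Tr d c (\<lambda>a. c a < K) w i j" for w i j
    proof -
      have m: "(\<forall>a. min K (n a) = c a) \<longleftrightarrow> (\<forall>a. (c a < K \<longrightarrow> n a = c a) \<and> (\<not> c a < K \<longrightarrow> c a \<le> n a))" for n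
        using True by (metis min.absorb_iff2 min_def nat_less_le not_le)
      show ?thesis using True m[of "\<lambda>a. cntd d w a i j"]
        by (auto simp: prof_def p Tr_def ltd_def d_def fun_eq_iff)
    qed
    show ?thesis using D1_walk[OF Q, of d c "\<lambda>a. c a < K"] by (simp add: eq)
  next
    case False
    show ?thesis
    proof (cases "oo = 1")
      case True
      have "D1 (\<lambda>w i. c = (\<lambda>_. 0) \<and> Q w i)" by (rule D1_and[OF D1_const Q])
      then show ?thesis by (rule D1_cong) (auto simp: prof_def p True split: if_splits)
    next
      case o1: False
      have "D1 (\<lambda>w i. False)" by (rule D1_const)
      then show ?thesis by (rule D1_cong) (use False o1 in \<open>auto simp: prof_def p split: if_splits\<close>)
    qed
  qed
qed

definition PS :: "nat \<Rightarrow> (nat \<times> ('a::finite \<Rightarrow> nat)) set" where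
"PS K = {0,1,2} \<times> {c. \<forall>a. c a \<le> K}"

lemma finite_PS: "finite (PS K)"
proof -
  have "{c :: 'a \<Rightarrow> nat. \<forall>a. c a \<le> K} = {f. \<forall>x. (x \<in> UNIV \<longrightarrow> f x \<in> {..K}) \<and> (x \<notin> UNIV \<longrightarrow> f x = 0)}"
    by auto
  moreover have "finite {f :: 'a \<Rightarrow> nat. \<forall>x. (x \<in> UNIV \<longrightarrow> f x \<in> {..K}) \<and> (x \<notin> UNIV \<longrightarrow> f x = 0)}"
    by (rule finite_set_of_finite_funs) auto
  ultimately show ?thesis unfolding PS_def by simp
qed

lemma prof_PS: "prof K w i j \<in> PS K"
  by (auto simp: prof_def PS_def)

lemma D1_QL:
  fixes Ps Qs :: "(('a::finite) list \<Rightarrow> nat \<Rightarrow> bool) list"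
  assumes Ps: "\<forall>P\<in>set Ps. D1 P" and Qs: "\<forall>Q\<in>set Qs. D1 Q"
  shows "D1 (\<lambda>w i. \<exists>j<length w. F (map (\<lambda>P. P w i) Ps) (map (\<lambda>Q. Q w j) Qs) (prof K w i j))"
proof -
  let ?B = "\<lambda>n. {bs :: bool list. set bs \<subseteq> UNIV \<and> length bs = n}"
  let ?T = "?B (length Ps) \<times> ?B (length Qs) \<times> PS K"
  have fB: "\<And>n. finite {bs :: bool list. length bs = n}" using finite_lists_length_eq[of "UNIV::bool set"] by simp
  have fin: "finite ?T" by (intro finite_cartesian_product finite_PS) (use fB in simp)+
  have "D1 (\<lambda>w i. \<exists>t\<in>?T. (F (fst t) (fst (snd t)) (snd (snd t)) \<and> map (\<lambda>P. P w i) Ps = fst t) \<and>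
      (\<exists>j<length w. prof K w i j = snd (snd t) \<and> map (\<lambda>Q. Q w j) Qs = fst (snd t)))"
    by (rule D1_fin_ex[OF fin], rule ballI, rule D1_and, rule D1_and[OF D1_const D1_eqlist[OF Ps]],
        rule D1_prof[OF D1_eqlist[OF Qs]])
  then show ?thesis
  proof (rule D1_cong)
    fix w :: "'a list" and i
    show "(\<exists>t\<in>?T. (F (fst t) (fst (snd t)) (snd (snd t)) \<and> map (\<lambda>P. P w i) Ps = fst t) \<and>
      (\<exists>j<length w. prof K w i j = snd (snd t) \<and> map (\<lambda>Q. Q w j) Qs = fst (snd t))) =
      (\<exists>j<length w. F (map (\<lambda>P. P w i) Ps) (map (\<lambda>Q. Q w j) Qs) (prof K w i j))"
    proof
      assume "\<exists>j<length w. F (map (\<lambda>P. P w i) Ps) (map (\<lambda>Q. Q w j) Qs) (prof K w i j)"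
      then obtain j where j: "j < length w" "F (map (\<lambda>P. P w i) Ps) (map (\<lambda>Q. Q w j) Qs) (prof K w i j)" by blast
      show "\<exists>t\<in>?T. (F (fst t) (fst (snd t)) (snd (snd t)) \<and> map (\<lambda>P. P w i) Ps = fst t) \<and>
      (\<exists>j<length w. prof K w i j = snd (snd t) \<and> map (\<lambda>Q. Q w j) Qs = fst (snd t))"
        by (rule bexI[of _ "(map (\<lambda>P. P w i) Ps, map (\<lambda>Q. Q w j) Qs, prof K w i j)"]) (use j prof_PS in auto)
    qed auto
  qed
qed

definition Grep :: "(('a::finite) list \<Rightarrow> nat \<Rightarrow> nat \<Rightarrow> bool) \<Rightarrow> bool" where
"Grep R \<longleftrightarrow> (\<exists>K Ps Qs F. (\<forall>P\<in>set Ps. D1 P) \<and> (\<forall>Q\<in>set Qs. D1 Q) \<and>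
   (\<forall>w i j. i < length w \<longrightarrow> j < length w \<longrightarrow> R w i j = F (map (\<lambda>P. P w i) Ps) (map (\<lambda>Q. Q w j) Qs) (prof K w i j)))"

lemma G_prof: "(\<And>w i j. i < length w \<Longrightarrow> j < length w \<Longrightarrow> R w i j = f (prof K w i j)) \<Longrightarrow> Grep R"
  unfolding Grep_def by (rule exI[of _ K], rule exI[of _ "[]"], rule exI[of _ "[]"], rule exI[of _ "\<lambda>_ _ p. f p"]) auto

lemma G_P: "D1 P \<Longrightarrow> Grep (\<lambda>w i j. P w i)"
  unfolding Grep_def by (rule exI[of _ 0], rule exI[of _ "[P]"], rule exI[of _ "[]"], rule exI[of _ "\<lambda>bs _ _. hd bs"]) auto

lemma G_Q: "D1 Q \<Longrightarrow> Grep (\<lambda>w i j. Q w j)"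
  unfolding Grep_def by (rule exI[of _ 0], rule exI[of _ "[]"], rule exI[of _ "[Q]"], rule exI[of _ "\<lambda>_ cs _. hd cs"]) auto

lemma G_neg: "Grep R \<Longrightarrow> Grep (\<lambda>w i j. \<not> R w i j)"
  unfolding Grep_def
proof (elim exE conjE)
  fix K Ps Qs F assume h: "\<forall>P\<in>set Ps. D1 P" "\<forall>Q\<in>set Qs. D1 Q"
    "\<forall>w i j. i < length w \<longrightarrow> j < length w \<longrightarrow> R w i j = F (map (\<lambda>P. P w i) Ps) (map (\<lambda>Q. Q w j) Qs) (prof K w i j)"
  show "\<exists>K Ps Qs F. (\<forall>P\<in>set Ps. D1 P) \<and> (\<forall>Q\<in>set Qs. D1 Q) \<and>
   (\<forall>w i j. i < length w \<longrightarrow> j < length w \<longrightarrow> (\<not> R w i j) = F (map (\<lambda>P. P w i) Ps) (map (\<lambda>Q. Q w j) Qs) (prof K w i j))"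
    by (rule exI[of _ K], rule exI[of _ Ps], rule exI[of _ Qs], rule exI[of _ "\<lambda>a b c. \<not> F a b c"]) (use h in auto)
qed

definition capr :: "nat \<Rightarrow> nat \<times> ('a \<Rightarrow> nat) \<Rightarrow> nat \<times> ('a \<Rightarrow> nat)" where
"capr K p = (fst p, \<lambda>a. min K (snd p a))"

lemma prof_cap: "K \<le> K' \<Longrightarrow> prof K w i j = capr K (prof K' w i j)"
  by (auto simp: prof_def capr_def min_def fun_eq_iff)

lemma G_and: "Grep R1 \<Longrightarrow> Grep R2 \<Longrightarrow> Grep (\<lambda>w i j. R1 w i j \<and> R2 w i j)"
  unfolding Grep_def
proof (elim exE conjE)
  fix K1 Ps1 Qs1 F1 K2 Ps2 Qs2 F2 assume h1: "\<forall>P\<in>set Ps1. D1 P" "\<forall>Q\<in>set Qs1. D1 Q"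
    "\<forall>w i j. i < length w \<longrightarrow> j < length w \<longrightarrow> R1 w i j = F1 (map (\<lambda>P. P w i) Ps1) (map (\<lambda>Q. Q w j) Qs1) (prof K1 w i j)"
   and h2: "\<forall>P\<in>set Ps2. D1 P" "\<forall>Q\<in>set Qs2. D1 Q"
    "\<forall>w i j. i < length w \<longrightarrow> j < length w \<longrightarrow> R2 w i j = F2 (map (\<lambda>P. P w i) Ps2) (map (\<lambda>Q. Q w j) Qs2) (prof K2 w i j)"
  let ?F = "\<lambda>bs cs p. F1 (take (length Ps1) bs) (take (length Qs1) cs) (capr K1 p) \<and>
                      F2 (drop (length Ps1) bs) (drop (length Qs1) cs) (capr K2 p)"
  show "\<exists>K Ps Qs F. (\<forall>P\<in>set Ps. D1 P) \<and> (\<forall>Q\<in>set Qs. D1 Q) \<and>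
   (\<forall>w i j. i < length w \<longrightarrow> j < length w \<longrightarrow> (R1 w i j \<and> R2 w i j) = F (map (\<lambda>P. P w i) Ps) (map (\<lambda>Q. Q w j) Qs) (prof K w i j))"
    by (rule exI[of _ "max K1 K2"], rule exI[of _ "Ps1 @ Ps2"], rule exI[of _ "Qs1 @ Qs2"], rule exI[of _ ?F])
       (use h1 h2 in \<open>auto simp: prof_cap[of K1 "max K1 K2"] prof_cap[of K2 "max K1 K2"]\<close>)
qed

lemma G_exY: "Grep R \<Longrightarrow> D1 (\<lambda>w i. \<exists>j<length w. R w i j)"
  unfolding Grep_def
proof (elim exE conjE)
  fix K Ps Qs F assume h: "\<forall>P\<in>set Ps. D1 P" "\<forall>Q\<in>set Qs. D1 Q"
    "\<forall>w i j. i < length w \<longrightarrow> j < length w \<longrightarrow> R w i j = F (map (\<lambda>P. P w i) Ps) (map (\<lambda>Q. Q w j) Qs) (prof K w i j)"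
  show ?thesis using D1_QL[OF h(1,2), of F K] by (rule D1_cong) (use h(3) in auto)
qed

definition flipp :: "nat \<times> ('a \<Rightarrow> nat) \<Rightarrow> nat \<times> ('a \<Rightarrow> nat)" where
"flipp p = (2 - fst p, snd p)"

lemma prof_flip: "flipp (prof K w j i) = prof K w i j"
  by (auto simp: prof_def flipp_def cntd_def betw_def)

lemma G_exX: "Grep R \<Longrightarrow> D1 (\<lambda>w j. \<exists>i<length w. R w i j)"
  unfolding Grep_def
proof (elim exE conjE)
  fix K Ps Qs F assume h: "\<forall>P\<in>set Ps. D1 P" "\<forall>Q\<in>set Qs. D1 Q"
    "\<forall>w i j. i < length w \<longrightarrow> j < length w \<longrightarrow> R w i j = F (map (\<lambda>P. P w i) Ps) (map (\<lambda>Q. Q w j) Qs) (prof K w i j)"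
  show ?thesis using D1_QL[OF h(2,1), of "\<lambda>cs bs p. F bs cs (flipp p)" K]
    by (rule D1_cong) (use h(3) in \<open>auto simp: prof_flip\<close>)
qed

definition asg :: "nat \<Rightarrow> nat \<Rightarrow> var \<Rightarrow> nat" where
"asg i j = (\<lambda>z. case z of X \<Rightarrow> i | Y \<Rightarrow> j)"

lemma asg_simps[simp]: "asg i j X = i" "asg i j Y = j" "(asg i j)(X := k) = asg k j" "(asg i j)(Y := k) = asg i k"
  by (auto simp: asg_def fun_eq_iff split: var.splits)

lemma main: "Grep (\<lambda>w i j. sat_th w (asg i j) (f :: ('a::finite) fo2_th))"
proof (induction f)
  case (TLess x y)
  show ?case
  proof (rule G_prof[where K=0 and f = "\<lambda>p. if x = y then False else if x = X then fst p = 0 else fst p = 2"])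
    fix w :: "'a list" and i j
    show "sat_th w (asg i j) (TLess x y) = (if x = y then False else if x = X then fst (prof 0 w i j) = 0 else fst (prof 0 w i j) = 2)"
      by (cases x; cases y) (auto simp: prof_def)
  qed
next
  case (TLetter a x)
  show ?case
  proof (cases x)
    case X then show ?thesis using G_P[OF D1_letter[of a]] by simp
  next
    case Y then show ?thesis using G_Q[OF D1_letter[of a]] by simp
  qed
next
  case (TThr a k x y)
  show ?case
  proof (rule G_prof[where K=k and f = "\<lambda>p. if x = y then False else if x = X then fst p = 0 \<and> k \<le> snd p a else fst p = 2 \<and> k \<le> snd p a"])
    fix w :: "'a list" and i j
    show "sat_th w (asg i j) (TThr a k x y) = (if x = y then False else if x = X then fst (prof k w i j) = 0 \<and> k \<le> snd (prof k w i j) a else fst (prof k w i j) = 2 \<and> k \<le> snd (prof k w i j) a)"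
      by (cases x; cases y) (auto simp: prof_def cntd_def betw_def)
  qed
next
  case (TNeg f)
  then show ?case using G_neg by fastforce
next
  case (TAnd f g)
  then show ?case using G_and[OF TAnd.IH] by simp
next
  case (TEx x f)
  show ?case
  proof (cases x)
    case X
    have "D1 (\<lambda>w j. \<exists>i<length w. sat_th w (asg i j) f)" by (rule G_exX[OF TEx.IH])
    then show ?thesis using G_Q X by simp
  next
    case Y
    have "D1 (\<lambda>w i. \<exists>j<length w. sat_th w (asg i j) f)" by (rule G_exY[OF TEx.IH])
    then show ?thesis using G_P Y by simp
  qed
qed



fun tr :: "'a fo2_inv \<Rightarrow> 'a fo2_th" where
  "tr (ILess x y) = TLess x y"
| "tr (ILetter a x) = TLetter a x"
| "tr (IBetween a x y) = TThr a 1 x y"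
| "tr (INeg f) = TNeg (tr f)"
| "tr (IAnd f g) = TAnd (tr f) (tr g)"
| "tr (IEx x f) = TEx x (tr f)"

lemma fv_tr: "fv_th (tr f) = fv_inv f"
  by (induction f) auto

lemma sat_tr: "sat_th w v (tr f) = sat_inv w v f"
proof (induction f arbitrary: v)
  case (IBetween a x y)
  have fin: "finite {z. v x < z \<and> z < v y \<and> w ! z = a}"
    by (rule finite_subset[of _ "{..<v y}"]) auto
  show ?case using fin by (auto simp: Suc_le_eq card_gt_0_iff)
qed auto

lemma inv_to_th: "FO2_Inv_definable L \<Longrightarrow> FO2_Th_definable L"
  unfolding FO2_Inv_definable_def FO2_Th_definable_def lang_inv_def lang_th_def
proof (elim exE conjE)
  fix f assume "fv_inv f = {}" "L = {w. sat_inv w (\<lambda>_. 0) f}"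
  then show "\<exists>f. fv_th f = {} \<and> L = {w. sat_th w (\<lambda>_. 0) f}"
    by (intro exI[of _ "tr f"]) (simp add: fv_tr sat_tr)
qed

lemma th_to_inv:
  fixes L :: "('a::finite) list set"
  assumes "FO2_Th_definable L" shows "FO2_Inv_definable L"
proof -
  obtain f :: "'a fo2_th" where f: "fv_th f = {}" "L = lang_th f"
    using assms unfolding FO2_Th_definable_def by blast
  obtain K Ps Qs F where h: "\<forall>P\<in>set Ps. D1 P" "\<forall>Q\<in>set Qs. D1 Q"
    "\<And>w i j. i < length w \<Longrightarrow> j < length w \<Longrightarrow> sat_th w (asg i j) f = F (map (\<lambda>P. P w i) Ps) (map (\<lambda>Q. Q w j) Qs) (prof K w i j)"
    using main[of f] unfolding Grep_def by blast
  define H0 where "H0 = (\<lambda>w i. F (map (\<lambda>P. P w i) Ps) (map (\<lambda>Q. Q w i) Qs) (1, \<lambda>_. 0))"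
  have "D1 (\<lambda>w i. (\<lambda>bs. F (take (length Ps) bs) (drop (length Ps) bs) (1, \<lambda>_. 0)) (map (\<lambda>P. P w i) (Ps @ Qs)))"
    by (rule D1_bc) (use h(1,2) in auto)
  then have "D1 H0" unfolding H0_def by simp
  then obtain \<psi> where psi: "fv_inv \<psi> \<subseteq> {X}" "\<And>w v. v X < length w \<Longrightarrow> sat_inv w v \<psi> = H0 w (v X)"
    by (rule D1E[where x=X]) blast
  define \<sigma> where "\<sigma> = IEx X (IAnd (INeg (IEx Y (ILess Y X))) \<psi>)"
  have fs: "fv_inv \<sigma> = {}" using psi(1) by (auto simp: \<sigma>_def)
  have ss: "sat_inv w v \<sigma> = (w \<noteq> [] \<and> H0 w 0)" for w v
  proof -
    have "sat_inv w v \<sigma> = (\<exists>i<length w. \<not> (\<exists>j<length w. j < i) \<and> H0 w i)"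
      using psi(2) by (auto simp: \<sigma>_def)
    also have "\<dots> = (w \<noteq> [] \<and> H0 w 0)"
    proof
      assume "\<exists>i<length w. \<not> (\<exists>j<length w. j < i) \<and> H0 w i"
      then obtain i where "i < length w" "\<not> (\<exists>j<length w. j < i)" "H0 w i" by blast
      then have "i = 0" by (metis gr_zeroI order.strict_trans)
      then show "w \<noteq> [] \<and> H0 w 0" using \<open>i < length w\<close> \<open>H0 w i\<close> by auto
    next
      assume "w \<noteq> [] \<and> H0 w 0"
      then show "\<exists>i<length w. \<not> (\<exists>j<length w. j < i) \<and> H0 w i" by (intro exI[of _ 0]) auto
    qed
    finally show ?thesis .
  qed
  have thw: "w \<noteq> [] \<Longrightarrow> sat_th w (\<lambda>_. 0) f = H0 w 0" for w
  proof -
    assume "w \<noteq> []"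
    then have "sat_th w (asg 0 0) f = H0 w 0" using h(3)[of 0 w 0] by (simp add: H0_def prof_def)
    moreover have "(\<lambda>_. 0) = asg 0 0" by (auto simp: asg_def fun_eq_iff split: var.splits)
    ultimately show ?thesis by simp
  qed
  define NE :: "'a fo2_inv" where "NE = IEx X (INeg (ILess X X))"
  have sNE: "sat_inv w v NE = (w \<noteq> [])" for w v by (auto simp: NE_def)
  define b where "b = sat_th [] (\<lambda>_. 0) f"
  define \<sigma>' where "\<sigma>' = (if b then INeg (IAnd (INeg \<sigma>) NE) else \<sigma>)"
  have "fv_inv \<sigma>' = {}" using fs by (auto simp: \<sigma>'_def NE_def)
  moreover have "lang_inv \<sigma>' = lang_th f"
    unfolding lang_inv_def lang_th_def
  proof (intro Collect_cong)
    fix w :: "'a list"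
    show "sat_inv w (\<lambda>_. 0) \<sigma>' = sat_th w (\<lambda>_. 0) f"
    proof (cases "w = []")
      case True then show ?thesis using ss sNE by (auto simp: \<sigma>'_def b_def)
    next
      case False then show ?thesis using ss sNE thw by (auto simp: \<sigma>'_def)
    qed
  qed
  ultimately show ?thesis unfolding FO2_Inv_definable_def using f by metis
qed

theorem theorem1:
  fixes L :: "('a::finite) list set"
  shows "FO2_Inv_definable L \<longleftrightarrow> FO2_Th_definable L"
  using inv_to_th th_to_inv by blast

end
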